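(* Let $q>0$, $\mu=\sqrt q$, $H$ a $d$-dimensional Hilbert space with orthonormal basis $\psi_1,\dots,\psi_d$, $1\le n\le d$ and $1\le i_1<\dots<i_n\le d$. Then $(S_{i_1,\dots,i_n}^*\otimes1_H)(1_H\otimes S_{i_1,\dots,i_n})=(n-1)!_q(-\mu)^{n-1}1_{H_{i_1,\dots,i_n}}$ (as operators on $H$, $1_{H_{i_1,\dots,i_n}}$ the orthogonal projection onto $H_{i_1,\dots,i_n}$), and $(S_{i_1,\dots,i_n}^*\otimes1_{H^{\otimes(n-1)}})(1_{H^{\otimes(n-1)}}\otimes S_{i_1,\dots,i_n})=(-\mu)^{n-1}\varepsilon(A_{n-1})\,1_{H_{i_1,\dots,i_n}^{\otimes(n-1)}}$ (as operators on $H^{\otimes(n-1)}$). In particular $(S^*\otimes1_H)(1_H\otimes S)=(d-1)!_q(-\mu)^{d-1}1_H$ and $(S^*\otimes1_{H^{\otimes(d-1)}})(1_{H^{\otimes(d-1)}}\otimes S)=(-\mu)^{d-1}\varepsilon(A_{d-1})$.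
   Context: $g_q$ on $H\otimes H$: $g_q\psi_i\otimes\psi_j=-\mu\psi_j\otimes\psi_i$ ($i<j$), $g_q\psi_i\otimes\psi_i=-\psi_i\otimes\psi_i$, $g_q\psi_i\otimes\psi_j=(q-1)\psi_i\otimes\psi_j-\mu\psi_j\otimes\psi_i$ ($i>j$); $\varepsilon(g_i)=1_{H^{\otimes(i-1)}}\otimes g_q\otimes1$ defines the Jimbo–Woronowicz representations of the Hecke algebras $H_m(q)$. $A_1=1$, $A_{m+1}=\sum_{i=0}^m g_i\cdots g_1\sigma(A_m)$ with $\sigma(g_i)=g_{i+1}$; $n!_q=\prod_{j=1}^n(1+\dots+q^{j-1})$. $S_{i_1,\dots,i_n}:=\sum_{p\in\mathbb P_n}(-\mu)^{i(p)}\psi_{i_{p(1)}}\otimes\dots\otimes\psi_{i_{p(n)}}$ ($i(p)$ = number of inversions), viewed as a map $\mathbb C\to H^{\otimes n}$; $S=S_{1,\dots,d}$; $H_{i_1,\dots,i_n}=\mathrm{span}\{\psi_{i_1},\dots,\psi_{i_n}\}$. *)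

theory Defs
  imports Complex_Main "HOL-Combinatorics.Permutations"
begin

text \<open>Coordinate model: H = C^d with orthonormal basis psi_1..psi_d (indices 1..d).
  The basis of H^{\<otimes>m} is indexed by lists of length m with entries in {1..d}.
  An operator H^{\<otimes>m} -> H^{\<otimes>k} is represented by its matrix (kernel)
  K :: nat list => nat list => complex, K out in = <psi_out, T psi_in>.\<close>

type_synonym kernel = "nat list \<Rightarrow> nat list \<Rightarrow> complex"

definition tens :: "nat \<Rightarrow> nat \<Rightarrow> nat list set" where
  "tens d m = {xs. length xs = m \<and> set xs \<subseteq> {1..d}}"

definition kid :: kernel where
  "kid xs ys = (if xs = ys then 1 else 0)"

definition kcomp :: "nat \<Rightarrow> nat \<Rightarrow> kernel \<Rightarrow> kernel \<Rightarrow> kernel" where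
  "kcomp d m A B = (\<lambda>xs zs. \<Sum>ys\<in>tens d m. A xs ys * B ys zs)"

definition ktensor :: "nat \<Rightarrow> nat \<Rightarrow> kernel \<Rightarrow> kernel \<Rightarrow> kernel" where
  "ktensor po pin A B = (\<lambda>xs ys. A (take po xs) (take pin ys) * B (drop po xs) (drop pin ys))"

definition kadj :: "kernel \<Rightarrow> kernel" where
  "kadj A = (\<lambda>xs ys. cnj (A ys xs))"

definition kscale :: "complex \<Rightarrow> kernel \<Rightarrow> kernel" where
  "kscale c A = (\<lambda>xs ys. c * A xs ys)"

text \<open>orthogonal projection onto H_{i_1..i_n}^{\<otimes>m} (span of the psi_j, j in set I)\<close>
definition kproj :: "nat list \<Rightarrow> kernel" where
  "kproj I = (\<lambda>xs ys. if xs = ys \<and> set xs \<subseteq> set I then 1 else 0)"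

definition qmu :: "real \<Rightarrow> complex" where
  "qmu q = complex_of_real (sqrt q)"

text \<open>g_q on H \<otimes> H: gq_coef q a b i j = coefficient of psi_a \<otimes> psi_b in g_q(psi_i \<otimes> psi_j)\<close>
definition gq_coef :: "real \<Rightarrow> nat \<Rightarrow> nat \<Rightarrow> nat \<Rightarrow> nat \<Rightarrow> complex" where
  "gq_coef q a b i j =
     (if i < j then (if (a, b) = (j, i) then - qmu q else 0)
      else if i = j then (if (a, b) = (i, i) then -1 else 0)
      else (if (a, b) = (i, j) then complex_of_real (q - 1) else 0)
           + (if (a, b) = (j, i) then - qmu q else 0))"

definition gq :: "real \<Rightarrow> kernel" where
  "gq q = (\<lambda>xs ys. gq_coef q (xs ! 0) (xs ! 1) (ys ! 0) (ys ! 1))"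

text \<open>epsilon(g_k) = 1_{H^{\<otimes>(k-1)}} \<otimes> g_q \<otimes> 1\<close>
definition eps_g :: "real \<Rightarrow> nat \<Rightarrow> kernel" where
  "eps_g q k = ktensor (k - 1) (k - 1) kid (ktensor 2 2 (gq q) kid)"

fun eps_word :: "real \<Rightarrow> nat \<Rightarrow> nat \<Rightarrow> nat list \<Rightarrow> kernel" where
  "eps_word q d m [] = kid"
| "eps_word q d m (w # ws) = kcomp d m (eps_g q w) (eps_word q d m ws)"

text \<open>A_m as a formal sum (list, with multiplicity) of words in the generators:
  A_0 = A_1 = 1, A_{m+1} = sum_{i=0}^m g_i ... g_1 sigma(A_m), sigma(g_i) = g_{i+1}.\<close>
fun A_words :: "nat \<Rightarrow> nat list list" where
  "A_words 0 = [[]]"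
| "A_words (Suc m) =
     concat (map (\<lambda>i. map (\<lambda>w. rev [1..<Suc i] @ map Suc w) (A_words m)) [0..<Suc m])"

definition eps_A :: "real \<Rightarrow> nat \<Rightarrow> nat \<Rightarrow> kernel" where
  "eps_A q d m = (\<lambda>xs ys. \<Sum>w\<leftarrow>A_words m. eps_word q d m w xs ys)"

definition qfact :: "real \<Rightarrow> nat \<Rightarrow> real" where
  "qfact q n = (\<Prod>j=1..n. \<Sum>k<j. q ^ k)"

definition inversions :: "nat \<Rightarrow> (nat \<Rightarrow> nat) \<Rightarrow> nat" where
  "inversions n p = card {(a, b). a < b \<and> b < n \<and> p a > p b}"

text \<open>S_{i_1..i_n} as a vector in H^{\<otimes>n} (I = [i_1,...,i_n]); permutations of {0..<n}\<close>
definition Svec :: "real \<Rightarrow> nat list \<Rightarrow> nat list \<Rightarrow> complex" where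
  "Svec q I js = (\<Sum>p | p permutes {..<length I}.
      (- qmu q) ^ inversions (length I) p
      * (if js = map (\<lambda>k. I ! p k) [0..<length I] then 1 else 0))"

text \<open>S_{i_1..i_n} as a map C = H^{\<otimes>0} -> H^{\<otimes>n}\<close>
definition Sker :: "real \<Rightarrow> nat list \<Rightarrow> kernel" where
  "Sker q I = (\<lambda>xs ys. Svec q I xs)"

text \<open>(S^* \<otimes> 1_{H^{\<otimes>k}})(1_{H^{\<otimes>k}} \<otimes> S), operator on H^{\<otimes>k}, n = length I\<close>
definition SS_op :: "real \<Rightarrow> nat \<Rightarrow> nat list \<Rightarrow> nat \<Rightarrow> kernel" where
  "SS_op q d I k = kcomp d (length I + k)
      (ktensor 0 (length I) (kadj (Sker q I)) kid)
      (ktensor k k kid (Sker q I))"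

end

theory Submission
  imports Defs
begin

lemma tens_Suc_mem[simp]: "(b # r \<in> tens d (Suc m)) = (b \<in> {1..d} \<and> r \<in> tens d m)"
  by (auto simp: tens_def)

lemma tens_Nil_Suc[simp]: "[] \<notin> tens d (Suc m)"
  by (simp add: tens_def)

lemma tens_0[simp]: "tens d 0 = {[]}"
  by (auto simp: tens_def)

lemma tens_Suc: "tens d (Suc m) = (\<lambda>(b, r). b # r) ` ({1..d} \<times> tens d m)"
  by (auto simp: tens_def image_iff length_Suc_conv)

lemma finite_tens[simp]: "finite (tens d m)"
  by (induction m) (auto simp: tens_Suc)

lemma tens_len: "xs \<in> tens d m \<Longrightarrow> length xs = m"
  by (simp add: tens_def)

lemma sum_tens_Suc: "(\<Sum>ys\<in>tens d (Suc m). f ys) = (\<Sum>b\<in>{1..d}. \<Sum>r\<in>tens d m. f (b # r))"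
proof -
  have "inj_on (\<lambda>(b, r). b # r) ({1..d} \<times> tens d m)" by (auto simp: inj_on_def)
  then show ?thesis
    by (simp add: tens_Suc sum.reindex sum.cartesian_product case_prod_unfold)
qed

lemma sum_tens_add: "(\<Sum>ys\<in>tens d (n + k). f ys) = (\<Sum>u\<in>tens d n. \<Sum>v\<in>tens d k. f (u @ v))"
proof (induction n arbitrary: f)
  case 0 then show ?case by simp
next
  case (Suc n)
  have "(\<Sum>ys\<in>tens d (Suc n + k). f ys) = (\<Sum>b\<in>{1..d}. \<Sum>r\<in>tens d (n+k). f (b # r))"
    using sum_tens_Suc[where f=f and d=d and m="n+k"] by simp
  also have "\<dots> = (\<Sum>b\<in>{1..d}. \<Sum>u\<in>tens d n. \<Sum>v\<in>tens d k. f (b # u @ v))"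
    using Suc by simp
  also have "\<dots> = (\<Sum>u\<in>tens d (Suc n). \<Sum>v\<in>tens d k. f (u @ v))"
    by (simp add: sum_tens_Suc)
  finally show ?case .
qed

lemma sum_tens_snoc: "(\<Sum>ys\<in>tens d (Suc m). f ys) = (\<Sum>u\<in>tens d m. \<Sum>b\<in>{1..d}. f (u @ [b]))"
  using sum_tens_add[where f=f and d=d and n=m and k=1] by (simp add: sum_tens_Suc)

definition app :: "nat \<Rightarrow> nat \<Rightarrow> kernel \<Rightarrow> (nat list \<Rightarrow> complex) \<Rightarrow> nat list \<Rightarrow> complex" where
  "app d m K v xs = (\<Sum>ys\<in>tens d m. K xs ys * v ys)"

lemma app_cong: "(\<And>ys. ys \<in> tens d m \<Longrightarrow> v ys = w ys) \<Longrightarrow> app d m K v xs = app d m K w xs"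
  by (simp add: app_def)

lemma app_scale: "app d m K (\<lambda>ys. c * v ys) xs = c * app d m K v xs"
  by (simp add: app_def sum_distrib_left algebra_simps)

lemma app_add: "app d m K (\<lambda>ys. v ys + w ys) xs = app d m K v xs + app d m K w xs"
  by (simp add: app_def sum.distrib algebra_simps)

lemma app_diff: "app d m K (\<lambda>ys. v ys - w ys) xs = app d m K v xs - app d m K w xs"
  by (simp add: app_def sum_subtractf algebra_simps)

lemma app_sum: "app d m K (\<lambda>ys. \<Sum>b\<in>B. f b ys) xs = (\<Sum>b\<in>B. app d m K (f b) xs)"
  by (simp add: app_def sum_distrib_left sum.swap[of _ B] algebra_simps)

lemma app_zero: "app d m K (\<lambda>ys. 0) xs = 0"
  by (simp add: app_def)

lemma sum_delta_l: "finite A \<Longrightarrow> (\<Sum>y\<in>A. (if x = y then 1 else 0) * (f y :: 'a::comm_ring_1)) = (if x \<in> A then f x else 0)"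
proof -
  assume "finite A"
  have "(\<Sum>y\<in>A. (if x = y then 1 else 0) * f y) = (\<Sum>y\<in>A. if x = y then f y else 0)"
    by (rule sum.cong) auto
  then show ?thesis using \<open>finite A\<close> by (simp add: sum.delta)
qed

lemma sum_delta_r: "finite A \<Longrightarrow> (\<Sum>y\<in>A. (f y :: 'a::comm_ring_1) * (if y = x then 1 else 0)) = (if x \<in> A then f x else 0)"
proof -
  assume "finite A"
  have "(\<Sum>y\<in>A. f y * (if y = x then 1 else 0)) = (\<Sum>y\<in>A. if x = y then f y else 0)"
    by (rule sum.cong) auto
  then show ?thesis using \<open>finite A\<close> by (simp add: sum.delta)
qed

lemma app_kid: "xs \<in> tens d m \<Longrightarrow> app d m kid v xs = v xs"
  unfolding app_def kid_def by (simp add: sum_delta_l)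

lemma app_kcomp: "app d m (kcomp d m A B) v xs = app d m A (app d m B v) xs"
proof -
  have "app d m (kcomp d m A B) v xs = (\<Sum>z\<in>tens d m. \<Sum>y\<in>tens d m. A xs y * B y z * v z)"
    by (simp add: app_def kcomp_def sum_distrib_right)
  also have "\<dots> = (\<Sum>y\<in>tens d m. \<Sum>z\<in>tens d m. A xs y * B y z * v z)"
    by (rule sum.swap)
  also have "\<dots> = app d m A (app d m B v) xs"
    by (simp add: app_def sum_distrib_left mult.assoc)
  finally show ?thesis .
qed

lemma app_eps_word_append:
  "xs \<in> tens d m \<Longrightarrow> app d m (eps_word q d m (u @ w)) v xs
     = app d m (eps_word q d m u) (app d m (eps_word q d m w) v) xs"
proof (induction u arbitrary: xs)
  case Nil then show ?case by (simp add: app_kid)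
next
  case (Cons x u)
  have "app d m (eps_word q d m ((x # u) @ w)) v xs
      = app d m (eps_g q x) (app d m (eps_word q d m (u @ w)) v) xs"
    by (simp add: app_kcomp)
  also have "\<dots> = app d m (eps_g q x) (app d m (eps_word q d m u) (app d m (eps_word q d m w) v)) xs"
    by (rule app_cong) (simp add: Cons.IH)
  also have "\<dots> = app d m (eps_word q d m (x # u)) (app d m (eps_word q d m w) v) xs"
    by (simp add: app_kcomp)
  finally show ?case .
qed

lemma eps_word_col: "xs \<in> tens d m \<Longrightarrow> zs \<in> tens d m \<Longrightarrow> eps_word q d m w xs zs = app d m (eps_word q d m w) (\<lambda>r. kid r zs) xs"
proof -
  assume xs: "xs \<in> tens d m" and zs: "zs \<in> tens d m"
  have "app d m (eps_word q d m w) (\<lambda>r. kid r zs) xs = app d m (eps_word q d m (w @ [])) (\<lambda>r. kid r zs) xs" by simp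
  also have "\<dots> = app d m (eps_word q d m w) (app d m kid (\<lambda>r. kid r zs)) xs"
    using app_eps_word_append[OF xs, of q w "[]"] by simp
  finally have "app d m (eps_word q d m w) (\<lambda>r. kid r zs) xs = app d m (eps_word q d m w) (app d m kid (\<lambda>r. kid r zs)) xs" .
  moreover have "eps_word q d m w xs zs = app d m (eps_word q d m w) (app d m kid (\<lambda>r. kid r zs)) xs"
    unfolding app_def kid_def using zs by (simp add: sum_delta_l sum_delta_r)
  moreover have "app d m (eps_word q d m w) (app d m kid (\<lambda>r. kid r zs)) xs = app d m (eps_word q d m w) (\<lambda>r. kid r zs) xs"
    by (rule app_cong) (simp add: app_kid)
  ultimately show ?thesis by simp
qed


lemma if0_mult: "(if P then a else 0) * b = (if P then a * b else (0::'a::mult_zero))"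
  by simp

lemma eps_g_Suc: "1 \<le> x \<Longrightarrow> eps_g q (Suc x) (y # ys) (b # r) = (if y = b then eps_g q x ys r else 0)"
  by (cases x) (auto simp: eps_g_def ktensor_def kid_def)

lemma app_shift_g:
  assumes "1 \<le> x" "y \<in> {1..d}"
  shows "app d (Suc m) (eps_g q (Suc x)) V (y # ys) = app d m (eps_g q x) (\<lambda>r. V (y # r)) ys"
proof -
  have "app d (Suc m) (eps_g q (Suc x)) V (y # ys)
      = (\<Sum>b\<in>{1..d}. \<Sum>r\<in>tens d m. (if y = b then eps_g q x ys r * V (y # r) else 0))"
    unfolding app_def sum_tens_Suc using assms(1) by (simp add: eps_g_Suc if0_mult cong: if_cong)
  also have "\<dots> = (\<Sum>b\<in>{1..d}. if y = b then (\<Sum>r\<in>tens d m. eps_g q x ys r * V (y # r)) else 0)"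
    by (rule sum.cong) auto
  also have "\<dots> = app d m (eps_g q x) (\<lambda>r. V (y # r)) ys"
    using assms(2) by (simp add: sum.delta app_def)
  finally show ?thesis .
qed

lemma app_shift_word:
  assumes "\<forall>x\<in>set u. 1 \<le> x" "y \<in> {1..d}" "ys \<in> tens d m"
  shows "app d (Suc m) (eps_word q d (Suc m) (map Suc u)) v (y # ys) = app d m (eps_word q d m u) (\<lambda>r. v (y # r)) ys"
  using assms
proof (induction u arbitrary: ys)
  case Nil then show ?case by (simp add: app_kid)
next
  case (Cons x u)
  have "app d (Suc m) (eps_word q d (Suc m) (map Suc (x # u))) v (y # ys)
     = app d (Suc m) (eps_g q (Suc x)) (app d (Suc m) (eps_word q d (Suc m) (map Suc u)) v) (y # ys)"
    by (simp add: app_kcomp)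
  also have "\<dots> = app d m (eps_g q x) (\<lambda>r. app d (Suc m) (eps_word q d (Suc m) (map Suc u)) v (y # r)) ys"
    using Cons.prems by (simp add: app_shift_g)
  also have "\<dots> = app d m (eps_g q x) (app d m (eps_word q d m u) (\<lambda>r. v (y # r))) ys"
    by (rule app_cong) (use Cons in auto)
  also have "\<dots> = app d m (eps_word q d m (x # u)) (\<lambda>r. v (y # r)) ys"
    by (simp add: app_kcomp)
  finally show ?case .
qed

lemma double_delta:
  assumes "B \<in> {1..(d::nat)}" "C \<in> {1..d}"
  shows "(\<Sum>b\<in>{1..d}. \<Sum>c\<in>{1..d}. (if b = B \<and> c = C then K else 0) * (f b c :: complex)) = K * f B C"
proof -
  have "(\<Sum>b\<in>{1..d}. \<Sum>c\<in>{1..d}. (if b = B \<and> c = C then K else 0) * f b c)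
      = (\<Sum>b\<in>{1..d}. if b = B then (\<Sum>c\<in>{1..d}. if c = C then K * f b c else 0) else 0)"
    by (intro sum.cong) (auto simp: if0_mult)
  also have "\<dots> = (\<Sum>b\<in>{1..d}. if b = B then K * f b C else 0)"
    using assms(2) by (intro sum.cong refl) (simp add: sum.delta)
  also have "\<dots> = K * f B C" using assms(1) by (simp add: sum.delta)
  finally show ?thesis .
qed

lemma gq_sum:
  assumes "x1 \<in> {1..d}" "x2 \<in> {1..d}"
  shows "(\<Sum>b\<in>{1..d}. \<Sum>c\<in>{1..d}. gq_coef q x1 x2 b c * f b c)
    = (if x1 < x2 then - qmu q * f x2 x1 else if x1 = x2 then - f x1 x1
       else complex_of_real (q - 1) * f x1 x2 - qmu q * f x2 x1)"
proof (cases "x1 < x2")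
  case True
  have e: "gq_coef q x1 x2 b c = (if b = x2 \<and> c = x1 then - qmu q else 0)" for b c
    using True by (auto simp: gq_coef_def)
  have "(\<Sum>b\<in>{1..d}. \<Sum>c\<in>{1..d}. gq_coef q x1 x2 b c * f b c)
     = (\<Sum>b\<in>{1..d}. \<Sum>c\<in>{1..d}. (if b = x2 \<and> c = x1 then - qmu q else 0) * f b c)"
    by (simp only: e)
  also have "\<dots> = - qmu q * f x2 x1" by (rule double_delta[OF assms(2,1)])
  finally show ?thesis using True by simp
next
  case False
  show ?thesis
  proof (cases "x1 = x2")
    case True
    have e: "gq_coef q x1 x2 b c = (if b = x1 \<and> c = x1 then - 1 else 0)" for b c
      using True by (auto simp: gq_coef_def)
    have "(\<Sum>b\<in>{1..d}. \<Sum>c\<in>{1..d}. gq_coef q x1 x2 b c * f b c)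
       = (\<Sum>b\<in>{1..d}. \<Sum>c\<in>{1..d}. (if b = x1 \<and> c = x1 then - 1 else 0) * f b c)"
      by (simp only: e)
    also have "\<dots> = - 1 * f x1 x1" by (rule double_delta[OF assms(1,1)])
    finally show ?thesis using True by simp
  next
    case F2: False
    have e: "gq_coef q x1 x2 b c = (if b = x1 \<and> c = x2 then complex_of_real (q - 1) else 0)
         + (if b = x2 \<and> c = x1 then - qmu q else 0)" for b c
      using False F2 by (auto simp: gq_coef_def)
    have "(\<Sum>b\<in>{1..d}. \<Sum>c\<in>{1..d}. gq_coef q x1 x2 b c * f b c)
      = (\<Sum>b\<in>{1..d}. \<Sum>c\<in>{1..d}. (if b = x1 \<and> c = x2 then complex_of_real (q - 1) else 0) * f b c)
      + (\<Sum>b\<in>{1..d}. \<Sum>c\<in>{1..d}. (if b = x2 \<and> c = x1 then - qmu q else 0) * f b c)"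
      by (simp only: e distrib_right sum.distrib)
    also have "\<dots> = complex_of_real (q - 1) * f x1 x2 + - qmu q * f x2 x1"
      by (simp only: double_delta[OF assms(1,2)] double_delta[OF assms(2,1)])
    finally show ?thesis using False F2 by simp
  qed
qed

lemma app_g1:
  assumes "x1 \<in> {1..d}" "x2 \<in> {1..d}" "r \<in> tens d m"
  shows "app d (Suc (Suc m)) (eps_g q 1) v (x1 # x2 # r)
    = (if x1 < x2 then - qmu q * v (x2 # x1 # r) else if x1 = x2 then - v (x1 # x1 # r)
       else complex_of_real (q - 1) * v (x1 # x2 # r) - qmu q * v (x2 # x1 # r))" (is "_ = ?R")
proof -
  have e: "eps_g q 1 (x1 # x2 # r) (b # c # r') = gq_coef q x1 x2 b c * (if r' = r then 1 else 0)" for b c r'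
    by (auto simp: eps_g_def ktensor_def gq_def kid_def)
  have "app d (Suc (Suc m)) (eps_g q 1) v (x1 # x2 # r)
     = (\<Sum>b\<in>{1..d}. \<Sum>c\<in>{1..d}. \<Sum>r'\<in>tens d m. gq_coef q x1 x2 b c * v (b # c # r') * (if r' = r then 1 else 0))"
    unfolding app_def sum_tens_Suc e by (simp add: mult_ac)
  also have "\<dots> = (\<Sum>b\<in>{1..d}. \<Sum>c\<in>{1..d}. gq_coef q x1 x2 b c * v (b # c # r))"
    using assms(3) by (simp add: sum_delta_r)
  also have "\<dots> = ?R" by (rule gq_sum[OF assms(1,2)])
  finally show ?thesis .
qed


fun invl :: "nat list \<Rightarrow> nat" where
  "invl [] = 0"
| "invl (x # xs) = length (filter (\<lambda>y. y < x) xs) + invl xs"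

definition cnt :: "nat \<Rightarrow> nat set \<Rightarrow> nat" where
  "cnt b J = card {j\<in>J. j < b}"

definition cntg :: "nat \<Rightarrow> nat set \<Rightarrow> nat" where
  "cntg b J = card {j\<in>J. b < j}"

definition Tv :: "real \<Rightarrow> nat set \<Rightarrow> nat list \<Rightarrow> complex" where
  "Tv q J xs = (if distinct xs \<and> set xs = J then (- qmu q) ^ invl xs else 0)"

lemma Tv_zero: "\<not> (distinct xs \<and> set xs = J) \<Longrightarrow> Tv q J xs = 0"
  unfolding Tv_def by (rule if_not_P)

lemma Tv_Nil: "Tv q J [] = (if J = {} then 1 else 0)"
  by (auto simp: Tv_def)

lemma length_filter_distinct: "distinct r \<Longrightarrow> length (filter P r) = card {j\<in>set r. P j}"
  by (metis distinct_card distinct_filter set_filter)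

lemma Tv_cons: "Tv q J (b # r) = (if b \<in> J then (- qmu q) ^ cnt b J * Tv q (J - {b}) r else 0)"
proof (cases "b \<in> J")
  case True
  have iff: "(distinct (b # r) \<and> set (b # r) = J) = (distinct r \<and> set r = J - {b})"
    using True by auto
  show ?thesis
  proof (cases "distinct r \<and> set r = J - {b}")
    case T2: True
    have "length (filter (\<lambda>y. y < b) r) = card {j\<in>set r. j < b}"
      using T2 by (simp add: length_filter_distinct)
    also have "{j\<in>set r. j < b} = {j\<in>J. j < b}" using T2 by auto
    finally have "length (filter (\<lambda>y. y < b) r) = cnt b J" by (simp add: cnt_def)
    then show ?thesis using True T2 iff unfolding Tv_def by (simp add: power_add)
  next
    case False
    have "Tv q (J - {b}) r = 0" unfolding Tv_def using False by (intro if_not_P) blast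
    moreover have "Tv q J (b # r) = 0" using False iff by (simp only: Tv_def) simp
    ultimately show ?thesis using True by simp
  qed
next
  case False
  then show ?thesis by (auto simp: Tv_def)
qed

lemma invl_snoc: "invl (r @ [b]) = invl r + length (filter (\<lambda>y. b < y) r)"
  by (induction r) auto

lemma Tv_snoc: "Tv q J (r @ [b]) = (if b \<in> J then (- qmu q) ^ cntg b J * Tv q (J - {b}) r else 0)"
proof (cases "b \<in> J")
  case True
  have iff: "(distinct (r @ [b]) \<and> set (r @ [b]) = J) = (distinct r \<and> set r = J - {b})"
    using True by auto
  show ?thesis
  proof (cases "distinct r \<and> set r = J - {b}")
    case T2: True
    have "length (filter (\<lambda>y. b < y) r) = card {j\<in>set r. b < j}"
      using T2 by (simp add: length_filter_distinct)
    also have "{j\<in>set r. b < j} = {j\<in>J. b < j}" using T2 by auto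
    finally have "length (filter (\<lambda>y. b < y) r) = cntg b J" by (simp add: cntg_def)
    then show ?thesis using True T2 iff unfolding Tv_def by (simp add: power_add invl_snoc mult.commute)
  next
    case False
    have "Tv q (J - {b}) r = 0" unfolding Tv_def using False by (intro if_not_P) blast
    moreover have "Tv q J (r @ [b]) = 0" using False iff by (simp only: Tv_def) simp
    ultimately show ?thesis using True by simp
  qed
next
  case False
  then show ?thesis by (auto simp: Tv_def)
qed

lemma cnj_Tv[simp]: "cnj (Tv q J xs) = Tv q J xs"
  by (simp add: Tv_def qmu_def)

lemma mu_sq: "q \<ge> 0 \<Longrightarrow> (- qmu q) * (- qmu q) = complex_of_real q"
  by (simp add: qmu_def flip: of_real_mult)

lemma mu_sq': "q \<ge> 0 \<Longrightarrow> qmu q * qmu q = complex_of_real q"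
  by (simp add: qmu_def flip: of_real_mult)

lemma mu_pow_sq: "q \<ge> 0 \<Longrightarrow> (- qmu q) ^ k * (- qmu q) ^ k = complex_of_real q ^ k"
  by (simp add: mu_sq mu_sq' flip: power_mult_distrib)

lemma mu_nz: "q > 0 \<Longrightarrow> qmu q \<noteq> 0"
  by (simp add: qmu_def)

lemma sum_pow_cnt: "finite L \<Longrightarrow> (\<Sum>b\<in>L. x ^ cnt b L) = (\<Sum>k<card L. x ^ k)"
proof (induction "card L" arbitrary: L)
  case 0 then show ?case by simp
next
  case (Suc n)
  then have ne: "L \<noteq> {}" by auto
  define M where "M = Max L"
  have M: "M \<in> L" using Suc.prems ne by (simp add: M_def)
  define L' where "L' = L - {M}"
  have cL': "card L' = n" using Suc.hyps(2) M Suc.prems by (simp add: L'_def)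
  have fL': "finite L'" using Suc.prems by (simp add: L'_def)
  have c1: "cnt b L = cnt b L'" if "b \<in> L'" for b
  proof -
    have "b < M" using that Suc.prems by (auto simp: L'_def M_def intro: Max_ge order.not_eq_order_implies_strict)
    then have "{j\<in>L. j < b} = {j\<in>L'. j < b}" by (auto simp: L'_def)
    then show ?thesis by (simp add: cnt_def)
  qed
  have c2: "cnt M L = n"
  proof -
    have "{j\<in>L. j < M} = L'"
      using Suc.prems by (auto simp: L'_def M_def intro: order.not_eq_order_implies_strict)
    then show ?thesis using cL' by (simp add: cnt_def)
  qed
  have L: "L = insert M L'" using M by (auto simp: L'_def)
  have "(\<Sum>b\<in>L. x ^ cnt b L) = x ^ cnt M L + (\<Sum>b\<in>L'. x ^ cnt b L)"
    by (subst L, rule sum.insert) (use fL' in \<open>auto simp: L'_def\<close>)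
  also have "(\<Sum>b\<in>L'. x ^ cnt b L) = (\<Sum>b\<in>L'. x ^ cnt b L')"
    by (rule sum.cong) (auto simp: c1)
  also have "\<dots> = (\<Sum>k<n. x ^ k)" using Suc.hyps(1)[OF cL'[symmetric] fL'] cL' by simp
  finally show ?case using c2 by (simp add: Suc.hyps(2)[symmetric] add.commute)
qed

lemma sum_pow_cnt_less: "finite J \<Longrightarrow> (\<Sum>b\<in>{b\<in>J. b < a}. x ^ cnt b J) = (\<Sum>k<cnt a J. x ^ k)"
proof -
  assume f: "finite J"
  have "(\<Sum>b\<in>{b\<in>J. b < a}. x ^ cnt b J) = (\<Sum>b\<in>{b\<in>J. b < a}. x ^ cnt b {b\<in>J. b < a})"
  proof (rule sum.cong)
    fix b assume "b \<in> {b\<in>J. b < a}"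
    then have "{j\<in>J. j < b} = {j\<in>{b\<in>J. b < a}. j < b}" by auto
    then show "x ^ cnt b J = x ^ cnt b {b\<in>J. b < a}" by (simp add: cnt_def)
  qed simp
  also have "\<dots> = (\<Sum>k<card {b\<in>J. b < a}. x ^ k)"
    by (rule sum_pow_cnt) (use f in simp)
  finally show ?thesis by (simp add: cnt_def)
qed


definition pre :: "nat \<Rightarrow> (nat list \<Rightarrow> complex) \<Rightarrow> nat list \<Rightarrow> complex" where
  "pre a f ys = (case ys of [] \<Rightarrow> 0 | y # r \<Rightarrow> if y = a then f r else 0)"

lemma pre_Cons[simp]: "pre a f (y # r) = (if y = a then f r else 0)"
  by (simp add: pre_def)

definition SPK :: "real \<Rightarrow> nat \<Rightarrow> nat \<Rightarrow> kernel" where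
  "SPK q d m xs ys = (\<Sum>i<Suc m. eps_word q d (Suc m) (rev [1..<Suc i]) xs ys)"

definition SP :: "real \<Rightarrow> nat \<Rightarrow> nat \<Rightarrow> (nat list \<Rightarrow> complex) \<Rightarrow> nat list \<Rightarrow> complex" where
  "SP q d m v xs = app d (Suc m) (SPK q d m) v xs"

lemma SP_sum_form: "SP q d m v xs = (\<Sum>i<Suc m. app d (Suc m) (eps_word q d (Suc m) (rev [1..<Suc i])) v xs)"
  unfolding SP_def SPK_def app_def sum_distrib_right by (rule sum.swap)

lemma SP_cong: "(\<And>ys. ys \<in> tens d (Suc m) \<Longrightarrow> v ys = w ys) \<Longrightarrow> SP q d m v xs = SP q d m w xs"
  unfolding SP_def by (rule app_cong)

lemma SP_scale: "SP q d m (\<lambda>ys. c * v ys) xs = c * SP q d m v xs"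
  unfolding SP_def by (rule app_scale)

lemma SP_diff: "SP q d m (\<lambda>ys. v ys - w ys) xs = SP q d m v xs - SP q d m w xs"
  unfolding SP_def by (rule app_diff)

lemma SP_sum: "SP q d m (\<lambda>ys. \<Sum>b\<in>B. f b ys) xs = (\<Sum>b\<in>B. SP q d m (f b) xs)"
  unfolding SP_def by (rule app_sum)

lemma SP_zero: "SP q d m (\<lambda>ys. 0) xs = 0"
  unfolding SP_def by (rule app_zero)

lemma rev_upt_Suc: "rev [1..<Suc (Suc i)] = map Suc (rev [1..<Suc i]) @ [1]"
proof -
  have "[1..<Suc (Suc i)] = 1 # map Suc [1..<Suc i]"
    by (simp del: upt_Suc add: map_Suc_upt upt_conv_Cons)
  then show ?thesis by (simp add: rev_map)
qed

lemma SP_rec: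
  assumes "x1 \<in> {1..d}" "xs' \<in> tens d (Suc m)"
  shows "SP q d (Suc m) v (x1 # xs') = v (x1 # xs') + SP q d m (\<lambda>ys. app d (Suc (Suc m)) (eps_g q 1) v (x1 # ys)) xs'"
proof -
  have mem: "x1 # xs' \<in> tens d (Suc (Suc m))" using assms by simp
  have t: "app d (Suc (Suc m)) (eps_word q d (Suc (Suc m)) (rev [1..<Suc (Suc i)])) v (x1 # xs')
     = app d (Suc m) (eps_word q d (Suc m) (rev [1..<Suc i])) (\<lambda>ys. app d (Suc (Suc m)) (eps_g q 1) v (x1 # ys)) xs'" for i
  proof -
    have "app d (Suc (Suc m)) (eps_word q d (Suc (Suc m)) (rev [1..<Suc (Suc i)])) v (x1 # xs')
      = app d (Suc (Suc m)) (eps_word q d (Suc (Suc m)) (map Suc (rev [1..<Suc i]))) (app d (Suc (Suc m)) (eps_word q d (Suc (Suc m)) [1]) v) (x1 # xs')"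
      unfolding rev_upt_Suc by (rule app_eps_word_append[OF mem])
    also have "\<dots> = app d (Suc m) (eps_word q d (Suc m) (rev [1..<Suc i])) (\<lambda>r. app d (Suc (Suc m)) (eps_word q d (Suc (Suc m)) [1]) v (x1 # r)) xs'"
      by (rule app_shift_word) (use assms in auto)
    also have "\<dots> = app d (Suc m) (eps_word q d (Suc m) (rev [1..<Suc i])) (\<lambda>ys. app d (Suc (Suc m)) (eps_g q 1) v (x1 # ys)) xs'"
    proof (rule app_cong)
      fix ys assume "ys \<in> tens d (Suc m)"
      then have "x1 # ys \<in> tens d (Suc (Suc m))" using assms by simp
      then show "app d (Suc (Suc m)) (eps_word q d (Suc (Suc m)) [1]) v (x1 # ys) = app d (Suc (Suc m)) (eps_g q 1) v (x1 # ys)"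
        by (simp add: app_kcomp) (rule app_cong, simp add: app_kid)
    qed
    finally show ?thesis .
  qed
  have r0: "rev [1..<Suc 0] = []" by simp
  show ?thesis
    unfolding SP_sum_form sum.lessThan_Suc_shift t r0 eps_word.simps(1) app_kid[OF mem] ..
qed

lemma geo_c: "1 + (x - 1) * (\<Sum>k<n. x ^ k) = (x::complex) ^ n"
  using power_diff_1_eq[of x n] by (metis add.commute diff_add_cancel)


lemma pre_sum: "finite J \<Longrightarrow> (\<Sum>b\<in>{b\<in>J. b < a}. c b * pre b (f b) (x2 # r)) = (if x2 \<in> J \<and> x2 < a then c x2 * f x2 r else 0)"
proof -
  assume f: "finite J"
  have "(\<Sum>b\<in>{b\<in>J. b < a}. c b * pre b (f b) (x2 # r)) = (\<Sum>b\<in>{b\<in>J. b < a}. if x2 = b then c b * f b r else 0)"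
    by (rule sum.cong) auto
  also have "\<dots> = (if x2 \<in> {b\<in>J. b < a} then c x2 * f x2 r else 0)"
    using f by (simp add: sum.delta')
  finally show ?thesis by simp
qed

lemma G_eq_a:
  assumes "a \<in> {1..d}" "x2 \<in> {1..d}" "r \<in> tens d m" "finite J"
  shows "app d (Suc (Suc m)) (eps_g q 1) (pre a (Tv q J)) (a # x2 # r)
    = complex_of_real (q - 1) * (\<Sum>b\<in>{b\<in>J. b < a}. (- qmu q) ^ cnt b J * pre b (Tv q (J - {b})) (x2 # r))
      - (if a \<in> J then (- qmu q) ^ cnt a J * pre a (Tv q (J - {a})) (x2 # r) else 0)"
  unfolding app_g1[OF assms(1-3)] pre_sum[OF assms(4)]
  by (cases "a < x2"; cases "a = x2") (auto simp: Tv_cons)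

lemma G_eq_na:
  assumes "x1 \<in> {1..d}" "x2 \<in> {1..d}" "r \<in> tens d m" "x1 \<noteq> a"
  shows "app d (Suc (Suc m)) (eps_g q 1) (pre a (Tv q J)) (x1 # x2 # r)
    = (if x1 \<in> J then (- qmu q) ^ Suc (cnt x1 J) * pre a (Tv q (J - {x1})) (x2 # r) else 0)"
  unfolding app_g1[OF assms(1-3)]
  using assms(4) by (cases "x1 < x2"; cases "x1 = x2") (auto simp: Tv_cons)


lemma cnt_insert: "finite J \<Longrightarrow> a \<notin> J \<Longrightarrow> cnt x (insert a J) = (if a < x then Suc (cnt x J) else cnt x J)"
proof -
  assume f: "finite J" and a: "a \<notin> J"
  show ?thesis
  proof (cases "a < x")
    case True
    then have "{j\<in>insert a J. j < x} = insert a {j\<in>J. j < x}" by auto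
    then show ?thesis using True f a by (simp add: cnt_def)
  next
    case False
    then have "{j\<in>insert a J. j < x} = {j\<in>J. j < x}" by auto
    then show ?thesis using False by (simp add: cnt_def)
  qed
qed

lemma cnt_remove: "finite J \<Longrightarrow> x1 \<in> J \<Longrightarrow> cnt a (J - {x1}) = (if x1 < a then cnt a J - 1 else cnt a J)"
proof -
  assume f: "finite J" and x: "x1 \<in> J"
  have "{j\<in>J - {x1}. j < a} = {j\<in>J. j < a} - {x1}" by auto
  then show ?thesis using f x by (simp add: cnt_def card_Diff_singleton_if)
qed

lemma cnt_pos: "finite J \<Longrightarrow> x1 \<in> J \<Longrightarrow> x1 < a \<Longrightarrow> cnt a J \<ge> 1"
proof -
  assume "finite J" "x1 \<in> J" "x1 < a"
  then have "x1 \<in> {j\<in>J. j < a}" "finite {j\<in>J. j < a}" by auto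
  then show ?thesis unfolding cnt_def by (metis One_nat_def Suc_leI card_gt_0_iff empty_iff)
qed

lemma cnt_self_remove: "cnt b (J - {b}) = cnt b J"
proof -
  have "{j\<in>J - {b}. j < b} = {j\<in>J. j < b}" by auto
  then show ?thesis by (simp add: cnt_def)
qed

lemma W_lemma:
  assumes q: "q > 0"
  shows "card J = m \<Longrightarrow> finite J \<Longrightarrow> J \<subseteq> {1..d} \<Longrightarrow> a \<in> {1..d} \<Longrightarrow> xs \<in> tens d (Suc m) \<Longrightarrow>
    SP q d m (pre a (Tv q J)) xs = (if a \<in> J then 0 else (- qmu q) ^ cnt a J * Tv q (insert a J) xs)"
proof (induction m arbitrary: a J xs)
  case 0
  then have J: "J = {}" by simp
  from 0 obtain x1 where xs: "xs = [x1]" by (cases xs) (auto simp: tens_def)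
  have "SP q d 0 (pre a (Tv q J)) xs = pre a (Tv q J) xs"
    using 0 by (simp add: SP_sum_form app_kid)
  moreover have "Tv q {} [] = 1" by (simp add: Tv_def)
  moreover have "Tv q {a} [x1] = (if x1 = a then 1 else 0)" by (auto simp: Tv_def)
  ultimately show ?case using J xs by (simp add: cnt_def)
next
  case (Suc m)
  obtain x1 xs' where xs: "xs = x1 # xs'" and x1: "x1 \<in> {1..d}" and xs': "xs' \<in> tens d (Suc m)"
    using Suc.prems(5) by (cases xs) auto
  have fJ: "finite J" by fact
  have IH: "SP q d m (pre a' (Tv q J')) xs' = (if a' \<in> J' then 0 else (- qmu q) ^ cnt a' J' * Tv q (insert a' J') xs')"
    if "card J' = m" "J' \<subseteq> {1..d}" "a' \<in> {1..d}" for a' J'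
    using Suc.IH[OF that(1) _ that(2,3) xs'] that(2) finite_subset by blast
  have rec: "SP q d (Suc m) (pre a (Tv q J)) xs = pre a (Tv q J) (x1 # xs')
      + SP q d m (\<lambda>ys. app d (Suc (Suc m)) (eps_g q 1) (pre a (Tv q J)) (x1 # ys)) xs'"
    using SP_rec[OF x1 xs'] xs by simp
  have cJ: "card (J - {b}) = m" if "b \<in> J" for b using Suc.prems(1,2) that by simp
  have sJ: "J - {b} \<subseteq> {1..d}" for b using Suc.prems(3) by auto
  have bd: "b \<in> {1..d}" if "b \<in> J" for b using Suc.prems(3) that by auto
  have insb: "insert b (J - {b}) = J" if "b \<in> J" for b using that by auto
  have Wb: "SP q d m (pre b (Tv q (J - {b}))) xs' = (- qmu q) ^ cnt b J * Tv q J xs'" if "b \<in> J" for b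
    using IH[OF cJ[OF that] sJ bd[OF that]] insb[OF that] by (simp add: cnt_self_remove)
  have geo: "1 + complex_of_real (q - 1) * (\<Sum>b\<in>{b\<in>J. b < a}. (- qmu q) ^ cnt b J * (- qmu q) ^ cnt b J)
      = complex_of_real q ^ cnt a J"
  proof -
    have "(\<Sum>b\<in>{b\<in>J. b < a}. (- qmu q) ^ cnt b J * (- qmu q) ^ cnt b J) = (\<Sum>b\<in>{b\<in>J. b < a}. complex_of_real q ^ cnt b J)"
      using q by (simp add: mu_pow_sq)
    also have "\<dots> = (\<Sum>k<cnt a J. complex_of_real q ^ k)" by (rule sum_pow_cnt_less[OF fJ])
    finally show ?thesis using geo_c[of "complex_of_real q" "cnt a J"] by simp
  qed
  show ?case
  proof (cases "x1 = a")
    case True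
    let ?H = "\<lambda>ys. complex_of_real (q - 1) * (\<Sum>b\<in>{b\<in>J. b < a}. (- qmu q) ^ cnt b J * pre b (Tv q (J - {b})) ys)
      - (if a \<in> J then (- qmu q) ^ cnt a J * pre a (Tv q (J - {a})) ys else 0)"
    have "SP q d m (\<lambda>ys. app d (Suc (Suc m)) (eps_g q 1) (pre a (Tv q J)) (x1 # ys)) xs' = SP q d m ?H xs'"
    proof (rule SP_cong)
      fix ys assume "ys \<in> tens d (Suc m)"
      then obtain x2 r where "ys = x2 # r" "x2 \<in> {1..d}" "r \<in> tens d m" by (cases ys) auto
      then show "app d (Suc (Suc m)) (eps_g q 1) (pre a (Tv q J)) (x1 # ys) = ?H ys"
        using G_eq_a[OF Suc.prems(4) _ _ fJ] True by simp
    qed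
    also have "\<dots> = complex_of_real (q - 1) * (\<Sum>b\<in>{b\<in>J. b < a}. (- qmu q) ^ cnt b J * SP q d m (pre b (Tv q (J - {b}))) xs')
      - (if a \<in> J then (- qmu q) ^ cnt a J * SP q d m (pre a (Tv q (J - {a}))) xs' else 0)"
      by (cases "a \<in> J") (simp_all add: SP_diff SP_scale SP_sum SP_zero)
    also have "\<dots> = complex_of_real (q - 1) * (\<Sum>b\<in>{b\<in>J. b < a}. (- qmu q) ^ cnt b J * (- qmu q) ^ cnt b J) * Tv q J xs'
      - (if a \<in> J then (- qmu q) ^ cnt a J * (- qmu q) ^ cnt a J * Tv q J xs' else 0)"
    proof -
      have "(\<Sum>b\<in>{b\<in>J. b < a}. (- qmu q) ^ cnt b J * SP q d m (pre b (Tv q (J - {b}))) xs')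
          = (\<Sum>b\<in>{b\<in>J. b < a}. (- qmu q) ^ cnt b J * (- qmu q) ^ cnt b J * Tv q J xs')"
        by (rule sum.cong) (auto simp: Wb)
      then show ?thesis by (simp add: Wb sum_distrib_right mult.assoc)
    qed
    finally have E: "SP q d m (\<lambda>ys. app d (Suc (Suc m)) (eps_g q 1) (pre a (Tv q J)) (x1 # ys)) xs' = \<dots>" .
    show ?thesis
    proof (cases "a \<in> J")
      case True
      have "SP q d (Suc m) (pre a (Tv q J)) xs
         = (1 + complex_of_real (q - 1) * (\<Sum>b\<in>{b\<in>J. b < a}. (- qmu q) ^ cnt b J * (- qmu q) ^ cnt b J)) * Tv q J xs'
           - (- qmu q) ^ cnt a J * (- qmu q) ^ cnt a J * Tv q J xs'"
        using rec E True \<open>x1 = a\<close> by (simp add: algebra_simps)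
      also have "\<dots> = 0" using geo q by (simp add: mu_pow_sq)
      finally show ?thesis using True by simp
    next
      case False
      have "SP q d (Suc m) (pre a (Tv q J)) xs
         = (1 + complex_of_real (q - 1) * (\<Sum>b\<in>{b\<in>J. b < a}. (- qmu q) ^ cnt b J * (- qmu q) ^ cnt b J)) * Tv q J xs'"
        using rec E False \<open>x1 = a\<close> by (simp add: algebra_simps)
      also have "\<dots> = (- qmu q) ^ cnt a J * (- qmu q) ^ cnt a J * Tv q J xs'" using geo q by (simp add: mu_pow_sq)
      also have "\<dots> = (- qmu q) ^ cnt a J * Tv q (insert a J) xs"
        using False fJ xs \<open>x1 = a\<close> by (simp add: Tv_cons cnt_insert)
      finally show ?thesis using False by simp
    qed
  next
    case False
    have "SP q d m (\<lambda>ys. app d (Suc (Suc m)) (eps_g q 1) (pre a (Tv q J)) (x1 # ys)) xs'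
        = SP q d m (\<lambda>ys. if x1 \<in> J then (- qmu q) ^ Suc (cnt x1 J) * pre a (Tv q (J - {x1})) ys else 0) xs'"
    proof (rule SP_cong)
      fix ys assume "ys \<in> tens d (Suc m)"
      then obtain x2 r where "ys = x2 # r" "x2 \<in> {1..d}" "r \<in> tens d m" by (cases ys) auto
      then show "app d (Suc (Suc m)) (eps_g q 1) (pre a (Tv q J)) (x1 # ys)
          = (if x1 \<in> J then (- qmu q) ^ Suc (cnt x1 J) * pre a (Tv q (J - {x1})) ys else 0)"
        using G_eq_na[OF x1 _ _ False] by simp
    qed
    also have "\<dots> = (if x1 \<in> J then (- qmu q) ^ Suc (cnt x1 J) * SP q d m (pre a (Tv q (J - {x1}))) xs' else 0)"
      by (cases "x1 \<in> J") (simp_all only: if_True if_False SP_scale SP_zero)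
    finally have E: "SP q d m (\<lambda>ys. app d (Suc (Suc m)) (eps_g q 1) (pre a (Tv q J)) (x1 # ys)) xs' = \<dots>" .
    have L: "SP q d (Suc m) (pre a (Tv q J)) xs
        = (if x1 \<in> J then (- qmu q) ^ Suc (cnt x1 J) * SP q d m (pre a (Tv q (J - {x1}))) xs' else 0)"
      using rec E False by simp
    show ?thesis
    proof (cases "x1 \<in> J")
      case x1J: True
      note IH1 = IH[OF cJ[OF x1J] sJ Suc.prems(4)]
      show ?thesis
      proof (cases "a \<in> J")
        case True
        then show ?thesis using L IH1 x1J False by simp
      next
        case aJ: False
        have ins: "insert a (J - {x1}) = insert a J - {x1}" using False by auto
        have ex: "Suc (cnt x1 J) + cnt a (J - {x1}) = cnt a J + cnt x1 (insert a J)"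
          using cnt_insert[OF fJ aJ, of x1] cnt_remove[OF fJ x1J, of a] cnt_pos[OF fJ x1J, of a] False
          by (cases "x1 < a") auto
        have "SP q d (Suc m) (pre a (Tv q J)) xs
            = (- qmu q) ^ (Suc (cnt x1 J) + cnt a (J - {x1})) * Tv q (insert a J - {x1}) xs'"
          using L IH1 x1J aJ ins by (simp add: power_add)
        also have "\<dots> = (- qmu q) ^ cnt a J * Tv q (insert a J) xs"
          unfolding ex using xs x1J by (simp add: Tv_cons power_add)
        finally show ?thesis using aJ by simp
      qed
    next
      case x1J: False
      then show ?thesis using L xs False by (simp add: Tv_cons)
    qed
  qed
qed


lemma A_letters: "w \<in> set (A_words m) \<Longrightarrow> \<forall>x\<in>set w. 1 \<le> x"
  by (cases m) auto

lemma sum_list_map_concat: "sum_list (map f (concat xss)) = sum_list (map (\<lambda>xs. sum_list (map f xs)) xss)"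
  by (induction xss) simp_all

lemma eps_A_Suc: "eps_A q d (Suc m) xs zs
   = (\<Sum>i<Suc m. \<Sum>w\<leftarrow>A_words m. eps_word q d (Suc m) (rev [1..<Suc i] @ map Suc w) xs zs)"
proof -
  have "eps_A q d (Suc m) xs zs
     = (\<Sum>i\<leftarrow>[0..<Suc m]. \<Sum>w\<leftarrow>A_words m. eps_word q d (Suc m) (rev [1..<Suc i] @ map Suc w) xs zs)"
    unfolding eps_A_def A_words.simps(2) by (simp only: sum_list_map_concat map_map comp_def)
  also have "\<dots> = (\<Sum>i<Suc m. \<Sum>w\<leftarrow>A_words m. eps_word q d (Suc m) (rev [1..<Suc i] @ map Suc w) xs zs)"
    by (simp only: sum_set_upt_conv_sum_list_nat[symmetric] atLeast0LessThan set_upt)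
  finally show ?thesis .
qed

lemma eps_word_append_col:
  assumes "xs \<in> tens d m" "zs \<in> tens d m"
  shows "eps_word q d m (u @ v) xs zs = app d m (eps_word q d m u) (\<lambda>ys. eps_word q d m v ys zs) xs"
proof -
  have "eps_word q d m (u @ v) xs zs = app d m (eps_word q d m (u @ v)) (\<lambda>r. kid r zs) xs"
    by (rule eps_word_col[OF assms])
  also have "\<dots> = app d m (eps_word q d m u) (app d m (eps_word q d m v) (\<lambda>r. kid r zs)) xs"
    by (rule app_eps_word_append[OF assms(1)])
  also have "\<dots> = app d m (eps_word q d m u) (\<lambda>ys. eps_word q d m v ys zs) xs"
    by (rule app_cong) (simp add: eps_word_col[OF _ assms(2)])
  finally show ?thesis .
qed

lemma app_sum_list: "app d m K (\<lambda>ys. \<Sum>w\<leftarrow>ws. f w ys) xs = (\<Sum>w\<leftarrow>ws. app d m K (f w) xs)"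
proof (induction ws)
  case Nil then show ?case by (simp add: app_zero)
next
  case (Cons w ws)
  then show ?case by (simp add: app_add)
qed

lemma eps_word_shift_col:
  assumes "\<forall>x\<in>set w. 1 \<le> x" "y \<in> {1..d}" "ys' \<in> tens d m" "a \<in> {1..d}" "zs' \<in> tens d m"
  shows "eps_word q d (Suc m) (map Suc w) (y # ys') (a # zs') = (if y = a then eps_word q d m w ys' zs' else 0)"
proof -
  have "eps_word q d (Suc m) (map Suc w) (y # ys') (a # zs') = app d (Suc m) (eps_word q d (Suc m) (map Suc w)) (\<lambda>r. kid r (a # zs')) (y # ys')"
    by (rule eps_word_col) (use assms in auto)
  also have "\<dots> = app d m (eps_word q d m w) (\<lambda>r. kid (y # r) (a # zs')) ys'"
    by (rule app_shift_word) (use assms in auto)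
  also have "\<dots> = app d m (eps_word q d m w) (\<lambda>r. (if y = a then 1 else 0) * kid r zs') ys'"
    by (rule app_cong) (simp add: kid_def)
  also have "\<dots> = (if y = a then 1 else 0) * eps_word q d m w ys' zs'"
    by (simp add: app_scale eps_word_col[OF assms(3,5)])
  finally show ?thesis by simp
qed

lemma eps_A_formula:
  assumes q: "q > 0"
  shows "xs \<in> tens d m \<Longrightarrow> zs \<in> tens d m \<Longrightarrow>
    eps_A q d m xs zs = (if distinct zs then (- qmu q) ^ invl zs * Tv q (set zs) xs else 0)"
proof (induction m arbitrary: xs zs)
  case 0
  then have "xs = []" "zs = []" by (auto simp: tens_def)
  then show ?case by (simp add: eps_A_def kid_def Tv_def)
next
  case (Suc m)
  obtain a zs' where zs: "zs = a # zs'" and a: "a \<in> {1..d}" and zs': "zs' \<in> tens d m"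
    using Suc.prems(2) by (cases zs) auto
  define c where "c = (if distinct zs' then (- qmu q) ^ invl zs' else 0)"
  have inner: "(\<Sum>w\<leftarrow>A_words m. eps_word q d (Suc m) (map Suc w) ys zs) = c * pre a (Tv q (set zs')) ys"
    if ys: "ys \<in> tens d (Suc m)" for ys
  proof -
    obtain y ys' where ys_eq: "ys = y # ys'" and y: "y \<in> {1..d}" and ys': "ys' \<in> tens d m"
      using ys by (cases ys) auto
    have "(\<Sum>w\<leftarrow>A_words m. eps_word q d (Suc m) (map Suc w) ys zs)
        = (\<Sum>w\<leftarrow>A_words m. (if y = a then eps_word q d m w ys' zs' else 0))"
      unfolding ys_eq zs
      by (rule arg_cong[where f=sum_list], rule map_cong[OF refl], rule eps_word_shift_col)
         (use A_letters y ys' a zs' in auto)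
    also have "\<dots> = (if y = a then eps_A q d m ys' zs' else 0)"
      by (simp add: eps_A_def)
    also have "\<dots> = c * pre a (Tv q (set zs')) ys"
      using Suc.IH[OF ys' zs'] ys_eq by (simp add: c_def)
    finally show ?thesis .
  qed
  have "eps_A q d (Suc m) xs zs
     = (\<Sum>i<Suc m. \<Sum>w\<leftarrow>A_words m. app d (Suc m) (eps_word q d (Suc m) (rev [1..<Suc i])) (\<lambda>ys. eps_word q d (Suc m) (map Suc w) ys zs) xs)"
    unfolding eps_A_Suc using Suc.prems by (simp add: eps_word_append_col)
  also have "\<dots> = (\<Sum>i<Suc m. app d (Suc m) (eps_word q d (Suc m) (rev [1..<Suc i])) (\<lambda>ys. \<Sum>w\<leftarrow>A_words m. eps_word q d (Suc m) (map Suc w) ys zs) xs)"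
    by (simp add: app_sum_list)
  also have "\<dots> = (\<Sum>i<Suc m. app d (Suc m) (eps_word q d (Suc m) (rev [1..<Suc i])) (\<lambda>ys. c * pre a (Tv q (set zs')) ys) xs)"
    by (rule sum.cong[OF refl], rule app_cong) (simp add: inner)
  also have "\<dots> = c * SP q d m (pre a (Tv q (set zs'))) xs"
    by (simp only: app_scale SP_sum_form sum_distrib_left)
  finally have E: "eps_A q d (Suc m) xs zs = c * SP q d m (pre a (Tv q (set zs'))) xs" .
  show ?case
  proof (cases "distinct zs'")
    case False
    then show ?thesis using E zs by (simp add: c_def)
  next
    case True
    have W: "SP q d m (pre a (Tv q (set zs'))) xs
        = (if a \<in> set zs' then 0 else (- qmu q) ^ cnt a (set zs') * Tv q (insert a (set zs')) xs)"
      by (rule W_lemma[OF q]) (use True zs' a Suc.prems(1) in \<open>auto simp: distinct_card tens_def\<close>)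
    have lf: "length (filter (\<lambda>y. y < a) zs') = cnt a (set zs')"
      using True by (simp add: length_filter_distinct cnt_def)
    show ?thesis using E W True zs by (simp add: c_def lf power_add)
  qed
qed


definition invset :: "nat list \<Rightarrow> (nat \<times> nat) set" where
  "invset l = {(i, j). i < j \<and> j < length l \<and> l ! j < l ! i}"

lemma invset_sub: "invset l \<subseteq> {..<length l} \<times> {..<length l}"
  by (auto simp: invset_def)

lemma finite_invset: "finite (invset l)"
  using invset_sub finite_subset by blast

lemma invset_Cons: "invset (x # xs) = (\<lambda>j. (0, Suc j)) ` {j. j < length xs \<and> xs ! j < x} \<union> (\<lambda>(i, j). (Suc i, Suc j)) ` invset xs"
proof (rule set_eqI)
  fix p :: "nat \<times> nat"
  obtain i j where p: "p = (i, j)" by (cases p)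
  show "p \<in> invset (x # xs) \<longleftrightarrow> p \<in> (\<lambda>j. (0, Suc j)) ` {j. j < length xs \<and> xs ! j < x} \<union> (\<lambda>(i, j). (Suc i, Suc j)) ` invset xs"
  proof (cases i)
    case 0
    then show ?thesis using p by (cases j) (auto simp: invset_def image_iff)
  next
    case (Suc i')
    show ?thesis
    proof (cases j)
      case 0 then show ?thesis using p Suc by (auto simp: invset_def image_iff)
    next
      case (Suc j')
      then show ?thesis using p \<open>i = Suc i'\<close> by (auto simp: invset_def image_iff)
    qed
  qed
qed

lemma invl_card: "invl l = card (invset l)"
proof (induction l)
  case Nil then show ?case by (simp add: invset_def)
next
  case (Cons x xs)
  have d: "(\<lambda>j. (0::nat, Suc j)) ` {j. j < length xs \<and> xs ! j < x} \<inter> (\<lambda>(i, j). (Suc i, Suc j)) ` invset xs = {}"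
    by auto
  have c1: "card ((\<lambda>j. (0::nat, Suc j)) ` {j. j < length xs \<and> xs ! j < x}) = length (filter (\<lambda>y. y < x) xs)"
    by (subst card_image) (auto simp: inj_on_def length_filter_conv_card)
  have c2: "card ((\<lambda>(i, j). (Suc i, Suc j)) ` invset xs) = card (invset xs)"
    by (rule card_image) (auto simp: inj_on_def)
  show ?case
    unfolding invset_Cons
    by (subst card_Un_disjoint) (use d c1 c2 Cons finite_invset in auto)
qed

lemma Svec_Tv:
  assumes srt: "sorted_wrt (<) I"
  shows "Svec q I js = Tv q (set I) js"
proof -
  let ?n = "length I"
  have dI: "distinct I" using srt by (simp add: strict_sorted_iff)
  have mapeq: "map (\<lambda>k. I ! p k) [0..<?n] = permute_list p I" for p
    by (simp add: permute_list_def)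
  have Sv: "Svec q I js = (\<Sum>p | p permutes {..<?n}. (- qmu q) ^ inversions ?n p * (if js = permute_list p I then 1 else 0))"
    unfolding Svec_def mapeq ..
  have fin: "finite {p. p permutes {..<?n}}" by (simp add: finite_permutations)
  show ?thesis
  proof (cases "distinct js \<and> set js = set I")
    case False
    have "(- qmu q) ^ inversions ?n p * (if js = permute_list p I then 1 else 0) = 0" if "p permutes {..<?n}" for p
      using False that dI by auto
    then have "Svec q I js = 0" unfolding Sv by (intro sum.neutral) auto
    then show ?thesis using Tv_zero[OF False] by simp
  next
    case True
    then have "mset js = mset I" using dI set_eq_iff_mset_eq_distinct by blast
    then obtain p0 where p0: "p0 permutes {..<?n}" "permute_list p0 I = js"
      by (rule mset_eq_permutation)
    have uniq: "p = p0" if "p permutes {..<?n}" "js = permute_list p I" for p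
    proof
      fix i show "p i = p0 i"
      proof (cases "i < ?n")
        case True
        have "permute_list p I ! i = permute_list p0 I ! i" using that(2) p0(2) by simp
        then have "I ! p i = I ! p0 i"
          using permute_list_nth[OF that(1) True] permute_list_nth[OF p0(1) True] by simp
        moreover have "p i < ?n" "p0 i < ?n" using that(1) p0(1) True by (auto dest: permutes_in_image)
        ultimately show ?thesis using dI by (simp add: nth_eq_iff_index_eq)
      next
        case False
        then show ?thesis using that(1) p0(1) by (simp add: permutes_not_in)
      qed
    qed
    have "Svec q I js = (\<Sum>p | p permutes {..<?n}. if p = p0 then (- qmu q) ^ inversions ?n p else 0)"
      unfolding Sv
    proof (rule sum.cong[OF refl])
      fix p assume "p \<in> {p. p permutes {..<?n}}"
      then have pp: "p permutes {..<?n}" by simp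
      show "(- qmu q) ^ inversions ?n p * (if js = permute_list p I then 1 else 0)
          = (if p = p0 then (- qmu q) ^ inversions ?n p else 0)"
      proof (cases "p = p0")
        case True then show ?thesis using p0(2) by simp
      next
        case False
        then have "js \<noteq> permute_list p I" using uniq[OF pp] by blast
        then show ?thesis using False by simp
      qed
    qed
    also have "\<dots> = (- qmu q) ^ inversions ?n p0"
      using fin p0 by (simp add: sum.delta)
    also have "inversions ?n p0 = invl js"
    proof -
      have lt: "(I ! p0 b < I ! p0 a) = (p0 b < p0 a)" if "a < ?n" "b < ?n" for a b
      proof -
        have ab: "p0 a < ?n" "p0 b < ?n" using that p0(1) by (auto dest: permutes_in_image)
        show ?thesis
        proof (cases "p0 b < p0 a")
          case True then show ?thesis using sorted_wrt_nth_less[OF srt True ab(1)] by simp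
        next
          case False
          then have "p0 a \<le> p0 b" by simp
          then show ?thesis using sorted_wrt_nth_less[OF srt _ ab(2), of "p0 a"] False
            by (cases "p0 a = p0 b") auto
        qed
      qed
      have ljs: "length js = ?n" using p0 by auto
      have "invset js = {(a, b). a < b \<and> b < ?n \<and> p0 b < p0 a}"
      proof -
        have jsn: "js ! k = I ! p0 k" if "k < ?n" for k
          using permute_list_nth[OF p0(1) that] p0(2) by simp
        show ?thesis
        proof (rule set_eqI, rule iffI)
          fix x assume "x \<in> invset js"
          then obtain a b where x: "x = (a, b)" "a < b" "b < ?n" "js ! b < js ! a"
            unfolding invset_def ljs by auto
          then show "x \<in> {(a, b). a < b \<and> b < ?n \<and> p0 b < p0 a}"
            using jsn[of a] jsn[of b] lt[of a b] by auto
        next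
          fix x assume "x \<in> {(a, b). a < b \<and> b < ?n \<and> p0 b < p0 a}"
          then obtain a b where x: "x = (a, b)" "a < b" "b < ?n" "p0 b < p0 a" by auto
          then show "x \<in> invset js"
            unfolding invset_def ljs using jsn[of a] jsn[of b] lt[of a b] by auto
        qed
      qed
      then show ?thesis by (simp add: invl_card inversions_def)
    qed
    finally show ?thesis using True by (simp add: Tv_def)
  qed
qed


lemma SS_expand:
  assumes "xs \<in> tens d k"
  shows "SS_op q d I k xs zs = (\<Sum>u\<in>tens d (length I). cnj (Svec q I u) * (kid (take k (u @ xs)) (take k zs) * Svec q I (drop k (u @ xs))))"
proof -
  let ?n = "length I"
  have "SS_op q d I k xs zs = (\<Sum>ys\<in>tens d (?n + k). (cnj (Svec q I (take ?n ys)) * kid xs (drop ?n ys)) * (kid (take k ys) (take k zs) * Svec q I (drop k ys)))"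
    by (simp add: SS_op_def kcomp_def ktensor_def kadj_def Sker_def)
  also have "\<dots> = (\<Sum>u\<in>tens d ?n. \<Sum>v\<in>tens d k. (cnj (Svec q I u) * kid xs v) * (kid (take k (u @ v)) (take k zs) * Svec q I (drop k (u @ v))))"
    unfolding sum_tens_add by (intro sum.cong refl) (simp add: tens_len)
  also have "\<dots> = (\<Sum>u\<in>tens d ?n. cnj (Svec q I u) * (kid (take k (u @ xs)) (take k zs) * Svec q I (drop k (u @ xs))))"
  proof (rule sum.cong[OF refl])
    fix u
    have "(\<Sum>v\<in>tens d k. (cnj (Svec q I u) * kid xs v) * (kid (take k (u @ v)) (take k zs) * Svec q I (drop k (u @ v))))
        = (\<Sum>v\<in>tens d k. (if xs = v then 1 else 0) * (cnj (Svec q I u) * (kid (take k (u @ v)) (take k zs) * Svec q I (drop k (u @ v)))))"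
      by (rule sum.cong) (auto simp: kid_def)
    also have "\<dots> = cnj (Svec q I u) * (kid (take k (u @ xs)) (take k zs) * Svec q I (drop k (u @ xs)))"
      using assms by (simp add: sum_delta_l)
    finally show "(\<Sum>v\<in>tens d k. (cnj (Svec q I u) * kid xs v) * (kid (take k (u @ v)) (take k zs) * Svec q I (drop k (u @ v))))
        = cnj (Svec q I u) * (kid (take k (u @ xs)) (take k zs) * Svec q I (drop k (u @ xs)))" .
  qed
  finally show ?thesis .
qed

lemma cnt_cntg: "finite J \<Longrightarrow> x \<in> J \<Longrightarrow> cnt x J + cntg x J = card J - 1"
proof -
  assume f: "finite J" and x: "x \<in> J"
  have "{j\<in>J. j < x} \<union> {j\<in>J. x < j} = J - {x}" by auto
  moreover have "{j\<in>J. j < x} \<inter> {j\<in>J. x < j} = {}" by auto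
  ultimately have "card {j\<in>J. j < x} + card {j\<in>J. x < j} = card (J - {x})"
    using f by (metis (no_types, lifting) card_Un_disjoint finite_Diff finite_Un)
  then show ?thesis using f x by (simp add: cnt_def cntg_def)
qed

lemma sum_sq_Tv:
  assumes q: "q \<ge> 0"
  shows "finite L \<Longrightarrow> L \<subseteq> {1..d} \<Longrightarrow> card L = m \<Longrightarrow> (\<Sum>u\<in>tens d m. Tv q L u * Tv q L u) = complex_of_real (qfact q m)"
proof (induction m arbitrary: L)
  case 0
  then show ?case by (simp add: Tv_def qfact_def)
next
  case (Suc m)
  have "(\<Sum>u\<in>tens d (Suc m). Tv q L u * Tv q L u)
      = (\<Sum>b\<in>{1..d}. if b \<in> L then complex_of_real q ^ cnt b L * (\<Sum>r\<in>tens d m. Tv q (L - {b}) r * Tv q (L - {b}) r) else 0)"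
    unfolding sum_tens_Suc
  proof (rule sum.cong[OF refl])
    fix b
    show "(\<Sum>r\<in>tens d m. Tv q L (b # r) * Tv q L (b # r))
      = (if b \<in> L then complex_of_real q ^ cnt b L * (\<Sum>r\<in>tens d m. Tv q (L - {b}) r * Tv q (L - {b}) r) else 0)"
    proof (cases "b \<in> L")
      case True
      have "(\<Sum>r\<in>tens d m. Tv q L (b # r) * Tv q L (b # r))
         = (\<Sum>r\<in>tens d m. ((- qmu q) ^ cnt b L * (- qmu q) ^ cnt b L) * (Tv q (L - {b}) r * Tv q (L - {b}) r))"
        using True by (simp add: Tv_cons mult_ac)
      then show ?thesis using True q by (simp add: mu_pow_sq sum_distrib_left)
    qed (simp add: Tv_cons)
  qed
  also have "\<dots> = (\<Sum>b\<in>{1..d}. if b \<in> L then complex_of_real q ^ cnt b L * complex_of_real (qfact q m) else 0)"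
  proof (rule sum.cong[OF refl])
    fix b assume "b \<in> {1..d}"
    show "(if b \<in> L then complex_of_real q ^ cnt b L * (\<Sum>r\<in>tens d m. Tv q (L - {b}) r * Tv q (L - {b}) r) else 0)
        = (if b \<in> L then complex_of_real q ^ cnt b L * complex_of_real (qfact q m) else 0)"
    proof (cases "b \<in> L")
      case True
      have "(\<Sum>r\<in>tens d m. Tv q (L - {b}) r * Tv q (L - {b}) r) = complex_of_real (qfact q m)"
        by (rule Suc.IH) (use Suc.prems True in auto)
      then show ?thesis by simp
    qed simp
  qed
  also have "\<dots> = (\<Sum>b\<in>L. complex_of_real q ^ cnt b L) * complex_of_real (qfact q m)"
    using Suc.prems(2) by (simp add: sum.If_cases Int_absorb1 sum_distrib_right)
  also have "\<dots> = (\<Sum>k<Suc m. complex_of_real q ^ k) * complex_of_real (qfact q m)"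
    using Suc.prems by (simp add: sum_pow_cnt)
  also have "\<dots> = complex_of_real (qfact q (Suc m))"
    by (simp add: qfact_def prod.cl_ivl_Suc mult.commute)
  finally show ?case .
qed


lemma part1:
  assumes q: "q > 0" and srt: "sorted_wrt (<) I" and sI: "set I \<subseteq> {1..d}" and n: "length I = Suc n'"
    and xs: "xs \<in> tens d 1" and zs: "zs \<in> tens d 1"
  shows "SS_op q d I 1 xs zs = kscale (complex_of_real (qfact q n') * (- qmu q) ^ n') (kproj I) xs zs"
proof -
  obtain x where x: "xs = [x]" "x \<in> {1..d}" using xs by (cases xs) (auto simp: tens_def)
  obtain z where z: "zs = [z]" "z \<in> {1..d}" using zs by (cases zs) (auto simp: tens_def)
  let ?J = "set I"
  have dI: "distinct I" using srt by (simp add: strict_sorted_iff)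
  have cJ: "card ?J = Suc n'" using dI n by (simp add: distinct_card)
  have fJ: "finite ?J" by simp
  have "SS_op q d I 1 xs zs = (\<Sum>u\<in>tens d (Suc n'). Tv q ?J u * (kid (take 1 (u @ [x])) [z] * Tv q ?J (drop 1 (u @ [x]))))"
    using SS_expand[OF xs, of q I zs] x z n by (simp add: Svec_Tv[OF srt])
  also have "\<dots> = (\<Sum>b\<in>{1..d}. (\<Sum>u\<in>tens d n'. Tv q ?J (z # u) * Tv q ?J (u @ [x])) * (if b = z then 1 else 0))"
    unfolding sum_tens_Suc sum_distrib_right by (intro sum.cong refl) (auto simp: kid_def)
  also have "\<dots> = (\<Sum>u\<in>tens d n'. Tv q ?J (z # u) * Tv q ?J (u @ [x]))"
    using z by (simp only: sum_delta_r[OF finite_atLeastAtMost]) simp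
  finally have E: "SS_op q d I 1 xs zs = (\<Sum>u\<in>tens d n'. Tv q ?J (z # u) * Tv q ?J (u @ [x]))" .
  show ?thesis
  proof (cases "x = z \<and> x \<in> ?J")
    case True
    have "(\<Sum>u\<in>tens d n'. Tv q ?J (z # u) * Tv q ?J (u @ [x]))
        = (\<Sum>u\<in>tens d n'. (- qmu q) ^ (cnt x ?J + cntg x ?J) * (Tv q (?J - {x}) u * Tv q (?J - {x}) u))"
      using True by (intro sum.cong refl) (clarsimp simp: Tv_cons Tv_snoc power_add mult_ac)
    also have "\<dots> = (- qmu q) ^ n' * complex_of_real (qfact q n')"
      unfolding sum_distrib_left[symmetric] cnt_cntg[OF fJ conjunct2[OF True]] cJ
      by (subst sum_sq_Tv) (use q sI cJ True in auto)
    finally show ?thesis using E True x z by (clarsimp simp: kscale_def kproj_def mult.commute)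
  next
    case False
    have Z: "Tv q ?J (z # u) * Tv q ?J (u @ [x]) = 0" for u
    proof (cases "x \<in> ?J \<and> z \<in> ?J")
      case True
      then have xz: "x \<noteq> z" using False by simp
      have "Tv q (?J - {z}) u * Tv q (?J - {x}) u = 0"
      proof (rule ccontr)
        assume "Tv q (?J - {z}) u * Tv q (?J - {x}) u \<noteq> 0"
        then have "set u = ?J - {z}" "set u = ?J - {x}" by (auto simp: Tv_def split: if_splits)
        then show False using True xz by blast
      qed
      then show ?thesis using True by (simp add: Tv_cons Tv_snoc) blast
    next
      case F2: False
      then show ?thesis by (auto simp: Tv_cons Tv_snoc)
    qed
    have S0: "(\<Sum>u\<in>tens d n'. Tv q ?J (z # u) * Tv q ?J (u @ [x])) = 0"
      by (intro sum.neutral ballI) (rule Z)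
    show ?thesis using E S0 False x z by (auto simp: kscale_def kproj_def)
  qed
qed


lemma kcomp_kproj:
  assumes "zs \<in> tens d m"
  shows "kcomp d m K (kproj I) xs zs = (if set zs \<subseteq> set I then K xs zs else 0)"
proof -
  have "kcomp d m K (kproj I) xs zs = (\<Sum>ys\<in>tens d m. (if set zs \<subseteq> set I then K xs ys else 0) * (if ys = zs then 1 else 0))"
    unfolding kcomp_def kproj_def by (intro sum.cong refl) auto
  also have "\<dots> = (if set zs \<subseteq> set I then K xs zs else 0)"
    using assms by (simp only: sum_delta_r[OF finite_tens]) simp
  finally show ?thesis .
qed

lemma key_sum:
  assumes sI: "set I \<subseteq> {1..d}" and dI: "distinct I" and n: "length I = Suc n'" and zs: "zs \<in> tens d n'"
  shows "(\<Sum>b\<in>{1..d}. if b \<in> set I then Tv q (set I - {b}) zs * Tv q (set I - {b}) xs else 0)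
     = (if set zs \<subseteq> set I \<and> distinct zs then (- qmu q) ^ invl zs * Tv q (set zs) xs else 0)"
proof (cases "set zs \<subseteq> set I \<and> distinct zs")
  case True
  have lz: "length zs = n'" using zs by (simp add: tens_len)
  have "card (set I - set zs) = 1"
    using True dI n lz by (simp add: card_Diff_subset distinct_card)
  then obtain b0 where b0: "set I - set zs = {b0}" by (rule card_1_singletonE)
  have b0I: "b0 \<in> set I" and b0z: "b0 \<notin> set zs" using b0 by auto
  have szs: "set zs = set I - {b0}" using b0 True by auto
  have "(\<Sum>b\<in>{1..d}. if b \<in> set I then Tv q (set I - {b}) zs * Tv q (set I - {b}) xs else 0)
      = (\<Sum>b\<in>{1..d}. if b = b0 then (- qmu q) ^ invl zs * Tv q (set zs) xs else 0)"
  proof (rule sum.cong[OF refl])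
    fix b
    show "(if b \<in> set I then Tv q (set I - {b}) zs * Tv q (set I - {b}) xs else 0)
        = (if b = b0 then (- qmu q) ^ invl zs * Tv q (set zs) xs else 0)"
    proof (cases "b = b0")
      case True
      then show ?thesis using b0I szs \<open>set zs \<subseteq> set I \<and> distinct zs\<close> by (simp add: Tv_def)
    next
      case False
      have "Tv q (set I - {b}) zs = 0"
      proof (rule Tv_zero)
        show "\<not> (distinct zs \<and> set zs = set I - {b})" using False b0I b0z by blast
      qed
      then show ?thesis using False by simp
    qed
  qed
  also have "\<dots> = (- qmu q) ^ invl zs * Tv q (set zs) xs"
    using b0I sI by (simp add: sum.delta subset_iff)
  finally show ?thesis using True by simp
next
  case False
  have "(if b \<in> set I then Tv q (set I - {b}) zs * Tv q (set I - {b}) xs else 0) = 0" for b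
  proof (cases "b \<in> set I")
    case True
    have "Tv q (set I - {b}) zs = 0"
      by (rule Tv_zero) (use False in blast)
    then show ?thesis by simp
  qed simp
  then have "(\<Sum>b\<in>{1..d}. if b \<in> set I then Tv q (set I - {b}) zs * Tv q (set I - {b}) xs else 0) = 0"
    by simp
  moreover have "(if set zs \<subseteq> set I \<and> distinct zs then (- qmu q) ^ invl zs * Tv q (set zs) xs else 0) = 0"
    using False by (intro if_not_P)
  ultimately show ?thesis by simp
qed

lemma part2:
  assumes q: "q > 0" and srt: "sorted_wrt (<) I" and sI: "set I \<subseteq> {1..d}" and n: "length I = Suc n'"
    and xs: "xs \<in> tens d n'" and zs: "zs \<in> tens d n'"
  shows "SS_op q d I n' xs zs = kscale ((- qmu q) ^ n') (kcomp d n' (eps_A q d n') (kproj I)) xs zs"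
proof -
  let ?J = "set I"
  have dI: "distinct I" using srt by (simp add: strict_sorted_iff)
  have cJ: "card ?J = Suc n'" using dI n by (simp add: distinct_card)
  have lz: "length zs = n'" using zs by (simp add: tens_len)
  have "SS_op q d I n' xs zs = (\<Sum>u\<in>tens d (Suc n'). Tv q ?J u * (kid (take n' (u @ xs)) (take n' zs) * Tv q ?J (drop n' (u @ xs))))"
    using SS_expand[OF xs, of q I zs] n by (simp add: Svec_Tv[OF srt])
  also have "\<dots> = (\<Sum>u\<in>tens d n'. (\<Sum>b\<in>{1..d}. Tv q ?J (u @ [b]) * Tv q ?J (b # xs)) * (if u = zs then 1 else 0))"
    unfolding sum_tens_snoc sum_distrib_right
    by (intro sum.cong refl) (auto simp: kid_def tens_len lz)
  also have "\<dots> = (\<Sum>b\<in>{1..d}. Tv q ?J (zs @ [b]) * Tv q ?J (b # xs))"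
    using zs by (simp only: sum_delta_r[OF finite_tens]) simp
  also have "\<dots> = (\<Sum>b\<in>{1..d}. (- qmu q) ^ n' * (if b \<in> ?J then Tv q (?J - {b}) zs * Tv q (?J - {b}) xs else 0))"
  proof (rule sum.cong[OF refl])
    fix b
    show "Tv q ?J (zs @ [b]) * Tv q ?J (b # xs) = (- qmu q) ^ n' * (if b \<in> ?J then Tv q (?J - {b}) zs * Tv q (?J - {b}) xs else 0)"
    proof (cases "b \<in> ?J")
      case True
      have "cnt b ?J + cntg b ?J = n'" using cnt_cntg[of ?J b] True cJ by simp
      then show ?thesis using True by (simp add: Tv_cons Tv_snoc mult_ac flip: power_add)
    qed (simp add: Tv_cons)
  qed
  also have "\<dots> = (- qmu q) ^ n' * (if set zs \<subseteq> ?J \<and> distinct zs then (- qmu q) ^ invl zs * Tv q (set zs) xs else 0)"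
    by (simp only: sum_distrib_left[symmetric] key_sum[OF sI dI n zs])
  also have "\<dots> = kscale ((- qmu q) ^ n') (kcomp d n' (eps_A q d n') (kproj I)) xs zs"
    unfolding kscale_def kcomp_kproj[OF zs] eps_A_formula[OF q xs zs] by simp
  finally show ?thesis .
qed

theorem lemma5p4:
  fixes q :: real and d n :: nat and I :: "nat list"
  assumes "q > 0" and "1 \<le> n" and "n \<le> d"
    and "length I = n" and "sorted_wrt (<) I" and "set I \<subseteq> {1..d}"
  shows "(\<forall>xs\<in>tens d 1. \<forall>ys\<in>tens d 1.
            SS_op q d I 1 xs ys
            = kscale (complex_of_real (qfact q (n - 1)) * (- qmu q) ^ (n - 1)) (kproj I) xs ys)
       \<and> (\<forall>xs\<in>tens d (n - 1). \<forall>ys\<in>tens d (n - 1).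
            SS_op q d I (n - 1) xs ys
            = kscale ((- qmu q) ^ (n - 1)) (kcomp d (n - 1) (eps_A q d (n - 1)) (kproj I)) xs ys)
       \<and> (\<forall>xs\<in>tens d 1. \<forall>ys\<in>tens d 1.
            SS_op q d [1..<Suc d] 1 xs ys
            = kscale (complex_of_real (qfact q (d - 1)) * (- qmu q) ^ (d - 1)) kid xs ys)
       \<and> (\<forall>xs\<in>tens d (d - 1). \<forall>ys\<in>tens d (d - 1).
            SS_op q d [1..<Suc d] (d - 1) xs ys
            = kscale ((- qmu q) ^ (d - 1)) (eps_A q d (d - 1)) xs ys)"
proof -
  obtain n' where n': "n = Suc n'" using assms(2) by (cases n) auto
  have len: "length I = Suc n'" using assms(4) n' by simp
  have P1: "\<forall>xs\<in>tens d 1. \<forall>ys\<in>tens d 1.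
            SS_op q d I 1 xs ys
            = kscale (complex_of_real (qfact q (n - 1)) * (- qmu q) ^ (n - 1)) (kproj I) xs ys"
    using part1[OF assms(1) assms(5) assms(6) len] n' by simp
  have P2: "\<forall>xs\<in>tens d (n - 1). \<forall>ys\<in>tens d (n - 1).
            SS_op q d I (n - 1) xs ys
            = kscale ((- qmu q) ^ (n - 1)) (kcomp d (n - 1) (eps_A q d (n - 1)) (kproj I)) xs ys"
    using part2[OF assms(1) assms(5) assms(6) len] n' by simp
  obtain d' where d': "d = Suc d'" using assms(2,3) by (cases d) auto
  have srt0: "sorted_wrt (<) [1..<Suc d]" by (simp only: strict_sorted_iff sorted_upt distinct_upt simp_thms)
  have set0: "set [1..<Suc d] \<subseteq> {1..d}" by auto
  have len0: "length [1..<Suc d] = Suc d'" using d' by simp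
  have P3: "\<forall>xs\<in>tens d 1. \<forall>ys\<in>tens d 1.
            SS_op q d [1..<Suc d] 1 xs ys
            = kscale (complex_of_real (qfact q (d - 1)) * (- qmu q) ^ (d - 1)) kid xs ys"
  proof (intro ballI)
    fix xs ys assume xs: "xs \<in> tens d 1" and ys: "ys \<in> tens d 1"
    have "kproj [1..<Suc d] xs ys = kid xs ys"
      using xs by (auto simp: kproj_def kid_def tens_def)
    then show "SS_op q d [1..<Suc d] 1 xs ys
            = kscale (complex_of_real (qfact q (d - 1)) * (- qmu q) ^ (d - 1)) kid xs ys"
      using part1[OF assms(1) srt0 set0 len0 xs ys] d' by (simp add: kscale_def)
  qed
  have P4: "\<forall>xs\<in>tens d (d - 1). \<forall>ys\<in>tens d (d - 1).
            SS_op q d [1..<Suc d] (d - 1) xs ys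
            = kscale ((- qmu q) ^ (d - 1)) (eps_A q d (d - 1)) xs ys"
  proof (intro ballI)
    fix xs ys assume xs: "xs \<in> tens d (d - 1)" and ys: "ys \<in> tens d (d - 1)"
    have "kcomp d d' (eps_A q d d') (kproj [1..<Suc d]) xs ys = eps_A q d d' xs ys"
      using ys d' by (subst kcomp_kproj) (auto simp: tens_def)
    then show "SS_op q d [1..<Suc d] (d - 1) xs ys
            = kscale ((- qmu q) ^ (d - 1)) (eps_A q d (d - 1)) xs ys"
      using part2[OF assms(1) srt0 set0 len0, of xs ys] xs ys d' by (simp add: kscale_def)
  qed
  show ?thesis using P1 P2 P3 P4 by blast
qed

end
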